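(* The number of $\lfloor\sqrt n\rfloor$-bounded walks with $n$ steps is $\Omega(2^n/\sqrt n)$ as $n\to\infty$.
   Context: A ballot sequence is a 0-1 sequence in which every nonempty prefix contains strictly more 1's than 0's. A 0-1 sequence corresponds to a lattice walk starting at the origin, where each term $1$ is a step $(1,1)$ and each term $0$ is a step $(1,-1)$; a ballot walk is the walk of a ballot sequence. For a positive integer $b$, a $b$-bounded walk is a ballot walk that never visits a point with $y>2b$ and whose endpoint has $y>b$. *)

theory Defs
  imports Complex_Main "HOL-Library.Landau_Symbols"
begin

text \<open>A 0-1 sequence is a list of booleans: True = term 1 = step (1,1),
  False = term 0 = step (1,-1). The height (y-coordinate) after the
  prefix of length k is (#1's) - (#0's) in that prefix.\<close>

definition height :: "bool list \<Rightarrow> int" where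
  "height xs = int (length (filter id xs)) - int (length (filter Not xs))"

definition ballot :: "bool list \<Rightarrow> bool" where
  "ballot xs \<longleftrightarrow> (\<forall>k\<in>{1..length xs}. height (take k xs) > 0)"

definition bounded_walk :: "nat \<Rightarrow> bool list \<Rightarrow> bool" where
  "bounded_walk b xs \<longleftrightarrow> ballot xs \<and>
     (\<forall>k\<le>length xs. height (take k xs) \<le> 2 * int b) \<and> height xs > int b"

definition num_bounded_walks :: "nat \<Rightarrow> nat" where
  "num_bounded_walks n = card {xs. length xs = n \<and> bounded_walk (nat \<lfloor>sqrt (real n)\<rfloor>) xs}"

end

theory Submission
  imports Defs
begin


definition hp :: "bool list \<Rightarrow> nat \<Rightarrow> int" where
  "hp xs k = height (take k xs)"

lemma height_Nil[simp]: "height [] = 0" by (simp add: height_def)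
lemma height_Cons[simp]: "height (x # xs) = (if x then 1 else -1) + height xs"
  by (simp add: height_def)
lemma height_append[simp]: "height (xs @ ys) = height xs + height ys"
  by (simp add: height_def)
lemma height_map_Not[simp]: "height (map Not xs) = - height xs"
  by (induction xs) auto

lemma hp_0[simp]: "hp xs 0 = 0" by (simp add: hp_def)
lemma hp_len: "length xs \<le> k \<Longrightarrow> hp xs k = height xs" by (simp add: hp_def)

lemma hp_Suc: "k < length xs \<Longrightarrow> hp xs (Suc k) = hp xs k + (if xs ! k then 1 else -1)"
  by (simp add: hp_def take_Suc_conv_app_nth)

lemma hp_step: "k < length xs \<Longrightarrow> hp xs (Suc k) = hp xs k + 1 \<or> hp xs (Suc k) = hp xs k - 1"
  using hp_Suc by auto

lemma hp_map_Not: "hp (map Not xs) k = - hp xs k"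
  by (simp add: hp_def take_map)

lemma ivt_up: "i \<le> j \<Longrightarrow> j \<le> length xs \<Longrightarrow> hp xs i \<le> c \<Longrightarrow> c \<le> hp xs j \<Longrightarrow> \<exists>k. i \<le> k \<and> k \<le> j \<and> hp xs k = c"
proof (induction j)
  case 0 then show ?case by auto
next
  case (Suc j)
  show ?case
  proof (cases "i = Suc j")
    case True then show ?thesis using Suc by auto
  next
    case False
    then have ij: "i \<le> j" using Suc by auto
    show ?thesis
    proof (cases "c \<le> hp xs j")
      case True then show ?thesis using Suc.IH[OF ij] Suc.prems by force
    next
      case False
      then have "hp xs (Suc j) = c" using hp_step[of j xs] Suc.prems by auto
      then show ?thesis using Suc.prems by auto
    qed
  qed
qed

lemma ivt_down: "i \<le> j \<Longrightarrow> j \<le> length xs \<Longrightarrow> c \<le> hp xs i \<Longrightarrow> hp xs j \<le> c \<Longrightarrow> \<exists>k. i \<le> k \<and> k \<le> j \<and> hp xs k = c"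
  using ivt_up[of i j "map Not xs" "-c"] by (simp add: hp_map_Not)

lemma hp_1: "xs \<noteq> [] \<Longrightarrow> hp xs 1 = (if hd xs then 1 else -1)"
  by (cases xs) (auto simp: hp_def)

definition rpre :: "nat \<Rightarrow> bool list \<Rightarrow> bool list" where
  "rpre t xs = map Not (take t xs) @ drop t xs"
definition rpost :: "nat \<Rightarrow> bool list \<Rightarrow> bool list" where
  "rpost t xs = take t xs @ map Not (drop t xs)"

lemma length_rpre[simp]: "length (rpre t xs) = length xs" by (simp add: rpre_def)
lemma length_rpost[simp]: "length (rpost t xs) = length xs" by (simp add: rpost_def)

lemma hp_rpre_le: "t \<le> length xs \<Longrightarrow> k \<le> t \<Longrightarrow> hp (rpre t xs) k = - hp xs k"
  by (simp add: hp_def rpre_def take_map min_def)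

lemma hp_rpre_ge: "t \<le> length xs \<Longrightarrow> t \<le> k \<Longrightarrow> hp (rpre t xs) k = hp xs k - 2 * hp xs t"
proof -
  assume a: "t \<le> length xs" "t \<le> k"
  have "take k xs = take t xs @ take (k - t) (drop t xs)"
    using a by (metis le_add_diff_inverse take_add)
  then show ?thesis using a by (simp add: hp_def rpre_def min_def)
qed

lemma hp_rpost_le: "t \<le> length xs \<Longrightarrow> k \<le> t \<Longrightarrow> hp (rpost t xs) k = hp xs k"
  by (simp add: hp_def rpost_def)

lemma hp_rpost_ge: "t \<le> length xs \<Longrightarrow> t \<le> k \<Longrightarrow> hp (rpost t xs) k = 2 * hp xs t - hp xs k"
proof -
  assume a: "t \<le> length xs" "t \<le> k"
  have "take k xs = take t xs @ take (k - t) (drop t xs)"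
    using a by (metis le_add_diff_inverse take_add)
  then show ?thesis using a by (simp add: hp_def rpost_def min_def take_map)
qed

lemma rpre_rpre[simp]: "rpre t (rpre t xs) = xs"
  by (simp add: rpre_def drop_map take_map min_def comp_def)
lemma rpost_rpost[simp]: "rpost t (rpost t xs) = xs"
  by (simp add: rpost_def drop_map take_map min_def comp_def)

definition S :: "nat \<Rightarrow> nat \<Rightarrow> bool list set" where
  "S m v = {ys. length ys = m \<and> length (filter id ys) = v}"

lemma finite_len: "finite {ys :: bool list. length ys = m}"
  using finite_lists_length_eq[of "UNIV :: bool set" m] by simp

lemma finite_len_sub: "finite {ys :: bool list. length ys = m \<and> P ys}"
  by (rule finite_subset[OF _ finite_len[of m]]) auto

lemma S_Suc: "S (Suc m) v = Cons False ` S m v \<union> Cons True ` {ys. length ys = m \<and> Suc (length (filter id ys)) = v}"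
  unfolding S_def
  by (auto simp: length_Suc_conv image_iff split: if_splits)

lemma card_S: "card (S m v) = m choose v"
proof (induction m arbitrary: v)
  case 0
  have "S 0 v = (if v = 0 then {[]} else {})" by (auto simp: S_def)
  then show ?case by simp
next
  case (Suc m)
  have fin: "finite (S m v)" for v unfolding S_def by (rule finite_len_sub)
  show ?case
  proof (cases v)
    case 0
    have "{ys. length ys = m \<and> Suc (length (filter id ys)) = v} = {}" using 0 by auto
    then show ?thesis using S_Suc[of m v] Suc.IH 0 by (simp add: card_image)
  next
    case (Suc w)
    have e: "{ys. length ys = m \<and> Suc (length (filter id ys)) = v} = S m w" using Suc by (auto simp: S_def)
    have "card (S (Suc m) v) = card (Cons False ` S m v) + card (Cons True ` S m w)"
      unfolding S_Suc e by (rule card_Un_disjoint) (use fin in auto)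
    also have "\<dots> = card (S m v) + card (S m w)" by (simp add: card_image)
    finally show ?thesis using Suc.IH Suc by simp
  qed
qed

lemma height_cnt: "height ys = 2 * int (length (filter id ys)) - int (length ys)"
proof -
  have "length (filter id ys) + length (filter Not ys) = length ys"
    using sum_length_filter_compl[of id ys] by (simp add: comp_def)
  then show ?thesis unfolding height_def by linarith
qed

definition G :: "nat \<Rightarrow> nat \<Rightarrow> bool list set" where
  "G m v = {ys. length ys = m \<and> length (filter id ys) \<ge> v}"

lemma card_G_diff: "card (G m v) = (m choose v) + card (G m (Suc v))"
proof -
  have "G m v = S m v \<union> G m (Suc v)" by (auto simp: G_def S_def)
  moreover have "S m v \<inter> G m (Suc v) = {}" by (auto simp: G_def S_def)
  ultimately show ?thesis using card_Un_disjoint[of "S m v" "G m (Suc v)"] card_S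
    unfolding S_def G_def by (simp add: finite_len_sub)
qed

lemma ballot_hp: "ballot xs \<longleftrightarrow> (\<forall>k. 1 \<le> k \<and> k \<le> length xs \<longrightarrow> hp xs k > 0)"
  by (auto simp: ballot_def hp_def)

definition Tset :: "nat \<Rightarrow> nat \<Rightarrow> bool list set" where
  "Tset n H = {xs. length xs = n \<and> ballot xs \<and> height xs \<ge> int H}"

definition tau :: "bool list \<Rightarrow> nat" where
  "tau xs = (LEAST k. 1 \<le> k \<and> hp xs k = 0)"
definition phi :: "bool list \<Rightarrow> bool list" where
  "phi xs = rpre (tau xs) xs"
definition Zs :: "bool list set" where
  "Zs = {xs. \<exists>k. 1 \<le> k \<and> k \<le> length xs \<and> hp xs k = 0}"

lemma tau_props: assumes "xs \<in> Zs"
  shows "1 \<le> tau xs" "tau xs \<le> length xs" "hp xs (tau xs) = 0"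
proof -
  obtain k where k: "1 \<le> k" "k \<le> length xs" "hp xs k = 0" using assms by (auto simp: Zs_def)
  have "1 \<le> tau xs \<and> hp xs (tau xs) = 0" unfolding tau_def by (rule LeastI[of _ k]) (use k in auto)
  moreover have "tau xs \<le> k" unfolding tau_def by (rule Least_le) (use k in auto)
  ultimately show "1 \<le> tau xs" "tau xs \<le> length xs" "hp xs (tau xs) = 0" using k by auto
qed

lemma hp_phi: assumes "xs \<in> Zs"
  shows "hp (phi xs) k = (if k \<le> tau xs then - hp xs k else hp xs k)"
  using tau_props[OF assms] hp_rpre_le[of "tau xs" xs k] hp_rpre_ge[of "tau xs" xs k]
  unfolding phi_def by auto

lemma hp_phi_zero: "xs \<in> Zs \<Longrightarrow> (hp (phi xs) k = 0) = (hp xs k = 0)"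
  by (simp add: hp_phi)

lemma tau_phi: "xs \<in> Zs \<Longrightarrow> tau (phi xs) = tau xs"
  unfolding tau_def by (simp add: hp_phi_zero)

lemma phi_Zs: "xs \<in> Zs \<Longrightarrow> phi xs \<in> Zs"
  unfolding Zs_def using hp_phi_zero[of xs] by (auto simp: phi_def) (auto simp: Zs_def)

lemma phi_phi: "xs \<in> Zs \<Longrightarrow> phi (phi xs) = xs"
  using tau_phi[of xs] unfolding phi_def[of "phi xs"] by (simp add: phi_def)

lemma length_phi[simp]: "length (phi xs) = length xs" by (simp add: phi_def)

lemma height_phi: "xs \<in> Zs \<Longrightarrow> height (phi xs) = height xs"
  using hp_phi[of xs "length xs"] tau_props[of xs] hp_len[of xs "length xs"] hp_len[of "phi xs" "length xs"]
  by (cases "length xs \<le> tau xs") auto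

lemma hp1_phi: "xs \<in> Zs \<Longrightarrow> hp (phi xs) 1 = - hp xs 1"
  using hp_phi[of xs 1] tau_props[of xs] by auto

lemma card_Tset:
  assumes n: "n \<ge> 1" and H: "H \<ge> 1"
  shows "card (Tset n H) = (n - 1) choose ((n - 1 + H) div 2)"
proof -
  define m where "m = n - 1"
  have nm: "n = Suc m" using n m_def by simp
  define v where "v = (m + H) div 2"
  define UP where "UP = {xs. length xs = n \<and> hp xs 1 = 1 \<and> height xs \<ge> int H}"
  define DN where "DN = {xs. length xs = n \<and> hp xs 1 = -1 \<and> height xs \<ge> int H}"
  have finUP: "finite UP" unfolding UP_def by (rule finite_len_sub)
  have T: "Tset n H = UP - Zs"
  proof (intro equalityI subsetI)
    fix xs assume "xs \<in> Tset n H"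
    then have xs: "length xs = n" "\<forall>k. 1 \<le> k \<and> k \<le> length xs \<longrightarrow> hp xs k > 0" "height xs \<ge> int H"
      by (auto simp: Tset_def ballot_hp)
    have "xs \<noteq> []" using xs n by auto
    then have "hp xs 1 = 1" using xs(2) n xs(1) hp_1[of xs] by (auto split: if_splits)
    then show "xs \<in> UP - Zs" using xs by (auto simp: UP_def Zs_def)
  next
    fix xs assume a: "xs \<in> UP - Zs"
    have "\<forall>k. 1 \<le> k \<and> k \<le> length xs \<longrightarrow> hp xs k > 0"
    proof (intro allI impI, rule ccontr)
      fix k assume k: "1 \<le> k \<and> k \<le> length xs" "\<not> hp xs k > 0"
      then obtain j where "1 \<le> j" "j \<le> k" "hp xs j = 0"
        using ivt_down[of 1 k xs 0] a by (auto simp: UP_def)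
      then show False using a k by (auto simp: Zs_def)
    qed
    then show "xs \<in> Tset n H" using a by (auto simp: Tset_def UP_def ballot_hp)
  qed
  have DNZ: "DN \<subseteq> Zs"
  proof
    fix xs assume a: "xs \<in> DN"
    have "hp xs n = height xs" using a by (auto simp: DN_def hp_len)
    then obtain j where "1 \<le> j" "j \<le> n" "hp xs j = 0"
      using ivt_up[of 1 n xs 0] a n H by (auto simp: DN_def)
    then show "xs \<in> Zs" using a by (auto simp: Zs_def DN_def)
  qed
  have img: "phi ` (UP \<inter> Zs) = DN"
  proof (intro equalityI subsetI)
    fix y assume "y \<in> phi ` (UP \<inter> Zs)"
    then obtain xs where "xs \<in> UP \<inter> Zs" "y = phi xs" by auto
    then show "y \<in> DN" using hp1_phi[of xs] height_phi[of xs] by (auto simp: UP_def DN_def)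
  next
    fix y assume a: "y \<in> DN"
    then have yz: "y \<in> Zs" using DNZ by auto
    have "phi y \<in> UP \<inter> Zs" using a yz hp1_phi[of y] height_phi[of y] phi_Zs[of y]
      by (auto simp: UP_def DN_def)
    moreover have "y = phi (phi y)" using phi_phi[OF yz] by simp
    ultimately show "y \<in> phi ` (UP \<inter> Zs)" by blast
  qed
  have inj: "inj_on phi (UP \<inter> Zs)"
    by (rule inj_on_inverseI[of _ phi]) (auto simp: phi_phi)
  have cUZ: "card (UP \<inter> Zs) = card DN" using card_image[OF inj] img by simp
  have hUP: "UP = Cons True ` G m v"
  proof (intro equalityI subsetI)
    fix xs assume a: "xs \<in> UP"
    then obtain x ys where xs: "xs = x # ys" "length ys = m" using nm by (auto simp: UP_def length_Suc_conv)
    then have "x" using a by (auto simp: UP_def hp_def split: if_splits)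
    then have "2 * int (length (filter id ys)) - int m \<ge> int H - 1" using a xs height_cnt[of ys] by (auto simp: UP_def)
    then have "length (filter id ys) \<ge> v" unfolding v_def by linarith
    then show "xs \<in> Cons True ` G m v" using xs \<open>x\<close> by (auto simp: G_def)
  next
    fix xs assume "xs \<in> Cons True ` G m v"
    then obtain ys where ys: "xs = True # ys" "length ys = m" "length (filter id ys) \<ge> v" by (auto simp: G_def)
    then have "2 * int (length (filter id ys)) - int m \<ge> int H - 1" unfolding v_def by linarith
    then show "xs \<in> UP" using ys nm height_cnt[of ys] by (auto simp: UP_def hp_def)
  qed
  have hDN: "DN = Cons False ` G m (Suc v)"
  proof (intro equalityI subsetI)
    fix xs assume a: "xs \<in> DN"
    then obtain x ys where xs: "xs = x # ys" "length ys = m" using nm by (auto simp: DN_def length_Suc_conv)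
    then have "\<not> x" using a by (auto simp: DN_def hp_def split: if_splits)
    then have "2 * int (length (filter id ys)) - int m \<ge> int H + 1" using a xs height_cnt[of ys] by (auto simp: DN_def)
    then have "length (filter id ys) \<ge> Suc v" unfolding v_def by linarith
    then show "xs \<in> Cons False ` G m (Suc v)" using xs \<open>\<not> x\<close> by (auto simp: G_def)
  next
    fix xs assume "xs \<in> Cons False ` G m (Suc v)"
    then obtain ys where ys: "xs = False # ys" "length ys = m" "length (filter id ys) \<ge> Suc v" by (auto simp: G_def)
    then have "2 * int (length (filter id ys)) - int m \<ge> int H + 1" unfolding v_def by linarith
    then show "xs \<in> DN" using ys nm height_cnt[of ys] by (auto simp: DN_def hp_def)
  qed
  have "card (Tset n H) = card UP - card (UP \<inter> Zs)"
    unfolding T by (rule card_Diff_subset_Int) (use finUP in auto)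
  also have "\<dots> = card (G m v) - card (G m (Suc v))" using cUZ hUP hDN by (simp add: card_image)
  also have "\<dots> = m choose v" using card_G_diff[of m v] by simp
  finally show ?thesis unfolding m_def v_def by simp
qed

definition sigma :: "int \<Rightarrow> bool list \<Rightarrow> nat" where
  "sigma a xs = (GREATEST k. k \<le> length xs \<and> hp xs k = a)"
definition psi :: "int \<Rightarrow> bool list \<Rightarrow> bool list" where
  "psi a xs = rpost (sigma a xs) xs"

lemma sigma_props:
  assumes "k0 \<le> length xs" "hp xs k0 = a"
  shows "sigma a xs \<le> length xs" "hp xs (sigma a xs) = a"
    "\<And>k. k \<le> length xs \<Longrightarrow> hp xs k = a \<Longrightarrow> k \<le> sigma a xs"
proof -
  have "sigma a xs \<le> length xs \<and> hp xs (sigma a xs) = a" unfolding sigma_def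
    by (rule GreatestI_nat[of _ k0 "length xs"]) (use assms in auto)
  then show "sigma a xs \<le> length xs" "hp xs (sigma a xs) = a" by auto
  show "\<And>k. k \<le> length xs \<Longrightarrow> hp xs k = a \<Longrightarrow> k \<le> sigma a xs" unfolding sigma_def
    by (rule Greatest_le_nat[of _ _ "length xs"]) auto
qed

lemma bad_bound:
  assumes b: "b \<ge> 1"
  shows "card (Tset n (b+1)) \<le> card {xs. length xs = n \<and> bounded_walk b xs} + card (Tset n (2*b+1)) + card (Tset n (2*b+2))"
proof -
  define a where "a = 2 * int b + 1"
  define Good where "Good = {xs. length xs = n \<and> bounded_walk b xs}"
  define Bad where "Bad = {xs. length xs = n \<and> ballot xs \<and> int b < height xs \<and> height xs \<le> 2 * int b \<and> (\<exists>k \<le> length xs. hp xs k > 2 * int b)}"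
  define A where "A = Tset n (b+1) - Tset n (2*b+1)"
  have finT: "finite (Tset n H)" for H unfolding Tset_def by (rule finite_len_sub)
  have sub1: "Tset n (2*b+1) \<subseteq> Tset n (b+1)" by (auto simp: Tset_def)
  have cA: "card A = card (Tset n (b+1)) - card (Tset n (2*b+1))"
    unfolding A_def by (rule card_Diff_subset[OF finT sub1])
  have le1: "card (Tset n (2*b+1)) \<le> card (Tset n (b+1))" by (rule card_mono[OF finT sub1])
  have AG: "A \<subseteq> Good \<union> Bad"
  proof
    fix xs assume "xs \<in> A"
    then have xs: "length xs = n" "ballot xs" "int b < height xs" "height xs \<le> 2 * int b"
      by (auto simp: A_def Tset_def)
    show "xs \<in> Good \<union> Bad"
    proof (cases "\<exists>k \<le> length xs. hp xs k > 2 * int b")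
      case True then show ?thesis using xs by (auto simp: Bad_def)
    next
      case False then show ?thesis using xs
        by (auto simp: Good_def bounded_walk_def hp_def not_less)
    qed
  qed
  have finG: "finite Good" unfolding Good_def by (rule finite_len_sub)
  have finB: "finite Bad" unfolding Bad_def by (rule finite_len_sub)
  have "card A \<le> card (Good \<union> Bad)" by (rule card_mono) (use AG finG finB in auto)
  also have "\<dots> \<le> card Good + card Bad" by (rule card_Un_le)
  finally have cAGB: "card A \<le> card Good + card Bad" .
  have key: "psi a xs \<in> Tset n (2*b+2) \<and> psi a (psi a xs) = xs" if xsB: "xs \<in> Bad" for xs
  proof -
    from xsB have xs: "length xs = n" "ballot xs" "int b < height xs" "height xs \<le> 2 * int b"
      by (auto simp: Bad_def)
    from xsB obtain k where k: "k \<le> length xs" "hp xs k > 2 * int b" by (auto simp: Bad_def)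
    have hn: "hp xs (length xs) < a" using xs hp_len[of xs "length xs"] by (simp add: a_def)
    obtain k0 where k0: "k \<le> k0" "k0 \<le> length xs" "hp xs k0 = a"
      using ivt_down[of k "length xs" xs a] k hn by (auto simp: a_def)
    note sp = sigma_props[OF k0(2,3)]
    define s where "s = sigma a xs"
    have after: "hp xs j < a" if "s < j" "j \<le> length xs" for j
    proof (rule ccontr)
      assume "\<not> hp xs j < a"
      then have "\<exists>j'. j \<le> j' \<and> j' \<le> length xs \<and> hp xs j' = a"
        using that hn by (intro ivt_down) auto
      then obtain j' where "j \<le> j'" "j' \<le> length xs" "hp xs j' = a" by blast
      then show False using sp(3)[of j'] that s_def by auto
    qed
    have hpsi: "hp (psi a xs) j = (if j \<le> s then hp xs j else 2 * a - hp xs j)" for j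
      using hp_rpost_le[of s xs j] hp_rpost_ge[of s xs j] sp s_def
      unfolding psi_def by auto
    have ballot_psi: "ballot (psi a xs)"
      unfolding ballot_hp
    proof (intro allI impI)
      fix j assume j: "1 \<le> j \<and> j \<le> length (psi a xs)"
      show "hp (psi a xs) j > 0"
      proof (cases "j \<le> s")
        case True then show ?thesis using xs(2) j hpsi[of j] by (auto simp: ballot_hp psi_def)
      next
        case False then show ?thesis using after[of j] j hpsi[of j] by (auto simp: a_def psi_def)
      qed
    qed
    have "height (psi a xs) = 2 * a - height xs"
    proof (cases "length xs \<le> s")
      case True
      then have "s = length xs" using sp s_def by auto
      then have "height xs = a" using sp s_def hp_len[of xs] by auto
      then show ?thesis using xs a_def by auto
    next
      case False
      then show ?thesis using hpsi[of "length xs"] hp_len[of xs "length xs"] hp_len[of "psi a xs" "length xs"]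
        by (simp add: psi_def)
    qed
    then have inT: "psi a xs \<in> Tset n (2*b+2)" using xs ballot_psi by (auto simp: Tset_def a_def psi_def)
    have "sigma a (psi a xs) = s"
      unfolding sigma_def
    proof (rule Greatest_equality)
      show "s \<le> length (psi a xs) \<and> hp (psi a xs) s = a" using hpsi[of s] sp s_def by (simp add: psi_def)
    next
      fix y assume y: "y \<le> length (psi a xs) \<and> hp (psi a xs) y = a"
      show "y \<le> s"
      proof (rule ccontr)
        assume "\<not> y \<le> s"
        then show False using after[of y] y hpsi[of y] by (auto simp: psi_def)
      qed
    qed
    then have "psi a (psi a xs) = xs" unfolding psi_def[of a "psi a xs"] by (simp add: psi_def s_def)
    then show ?thesis using inT by simp
  qed
  have inj: "inj_on (psi a) Bad" by (rule inj_on_inverseI[of _ "psi a"]) (use key in auto)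
  have "card Bad = card (psi a ` Bad)" using card_image[OF inj] by simp
  also have "\<dots> \<le> card (Tset n (2*b+2))" by (rule card_mono[OF finT]) (use key in auto)
  finally have "card Bad \<le> card (Tset n (2*b+2))" .
  then show ?thesis using cAGB cA le1 unfolding Good_def by linarith
qed



lemma ratio_nat: "Suc j * (m choose Suc j) = (m - j) * (m choose j)"
  using binomial_absorption[of j m] binomial_absorb_comp[of m j] by simp

lemma ratio: "real (m choose Suc j) = real (m choose j) * real (m - j) / real (Suc j)"
proof -
  have "real (Suc j) * real (m choose Suc j) = real (m - j) * real (m choose j)"
    using ratio_nat[of j m] by (metis of_nat_mult)
  then show ?thesis by (simp add: field_simps)
qed

lemma up_bound:
  assumes "p \<le> m"
  shows "real (m choose (p + d)) \<le> real (m choose p) * (real (m - p) / real (p + 1)) ^ d"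
proof (induction d)
  case 0 then show ?case by simp
next
  case (Suc d)
  have f: "real (m - (p + d)) / real (Suc (p + d)) \<le> real (m - p) / real (p + 1)"
    by (intro frac_le) auto
  have "real (m choose (p + Suc d)) = real (m choose (p + d)) * (real (m - (p + d)) / real (Suc (p + d)))"
    using ratio[of m "p + d"] by simp
  also have "\<dots> \<le> real (m choose (p + d)) * (real (m - p) / real (p + 1))"
    by (intro mult_left_mono f) auto
  also have "\<dots> \<le> real (m choose p) * (real (m - p) / real (p + 1)) ^ d * (real (m - p) / real (p + 1))"
    by (intro mult_right_mono Suc.IH) auto
  also have "\<dots> = real (m choose p) * (real (m - p) / real (p + 1)) ^ Suc d"
    by (metis power_Suc2 mult.assoc)
  finally show ?case by simp
qed

lemma down_bound:
  shows "c + d \<le> p \<Longrightarrow> p \<le> m \<Longrightarrow> real (m choose (c + d)) \<ge> real (m choose c) * (real (m - p + 1) / real p) ^ d"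
proof (induction d)
  case 0 then show ?case by simp
next
  case (Suc d)
  have f: "real (m - p + 1) / real p \<le> real (m - (c + d)) / real (Suc (c + d))"
    by (intro frac_le) (use Suc.prems in auto)
  have "real (m choose c) * (real (m - p + 1) / real p) ^ Suc d
       = real (m choose c) * (real (m - p + 1) / real p) ^ d * (real (m - p + 1) / real p)" by simp
  also have "\<dots> \<le> real (m choose (c + d)) * (real (m - p + 1) / real p)"
    by (intro mult_right_mono Suc.IH) (use Suc.prems in auto)
  also have "\<dots> \<le> real (m choose (c + d)) * (real (m - (c + d)) / real (Suc (c + d)))"
    by (intro mult_left_mono f) auto
  also have "\<dots> = real (m choose (c + Suc d))"
    using ratio[of m "c + d"] by simp
  finally show ?case .
qed

lemma central_rec: "real (Suc k) * real ((2 * Suc k) choose Suc k) = 2 * real (2 * k + 1) * real ((2 * k) choose k)"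
proof -
  define A where "A = (2 * Suc k) choose Suc k"
  define B where "B = Suc (2*k) choose k"
  define C where "C = (2*k) choose k"
  have a: "Suc k * A = Suc (2*k+1) * B"
    unfolding A_def B_def using Suc_times_binomial[of k "2*k+1"] by (simp del: binomial_Suc_Suc)
  have b: "Suc k * B = Suc (2*k) * C"
    unfolding B_def C_def using binomial_absorb_comp[of "Suc (2*k)" k]
    by (simp del: binomial_Suc_Suc add: Suc_diff_le)
  have eA: "real (Suc k) * real A = real (Suc (2*k+1)) * real B" using a by (metis of_nat_mult)
  have eB: "real (Suc k) * real B = real (Suc (2*k)) * real C" using b by (metis of_nat_mult)
  have "real (Suc k) * (real (Suc k) * real A) = real (Suc k) * (real (Suc (2*k+1)) * real B)"
    using eA by simp
  also have "\<dots> = real (Suc (2*k+1)) * (real (Suc k) * real B)" by (rule mult.left_commute)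
  also have "\<dots> = real (Suc (2*k+1)) * (real (Suc (2*k)) * real C)" using eB by simp
  also have "\<dots> = real (Suc k) * (2 * real (2 * k + 1) * real C)" by (simp add: algebra_simps)
  finally have "real (Suc k) * (real (Suc k) * real A) = real (Suc k) * (2 * real (2 * k + 1) * real C)" .
  then have "real (Suc k) * real A = 2 * real (2 * k + 1) * real C" by simp
  then show ?thesis unfolding A_def C_def .
qed

lemma central: "k \<ge> 1 \<Longrightarrow> (16::real) ^ k \<le> 4 * real k * real ((2 * k) choose k) ^ 2"
proof (induction k rule: dec_induct)
  case base then show ?case by simp
next
  case (step k)
  define X where "X = real ((2 * k) choose k)"
  have X': "real ((2 * Suc k) choose Suc k) = 2 * real (2 * k + 1) * X / real (Suc k)"
    using central_rec[of k] unfolding X_def by (simp add: field_simps)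
  have "(16::real) ^ Suc k = 16 * 16 ^ k" by simp
  also have "\<dots> \<le> 16 * (4 * real k * X ^ 2)" using step.IH X_def by simp
  also have "\<dots> \<le> 16 * X^2 * real (2*k+1)^2 / real (Suc k)"
  proof -
    have "4 * real k * real (Suc k) \<le> real (2*k+1)^2" by (simp add: power2_eq_square algebra_simps)
    then have "X^2 * (4 * real k * real (Suc k)) \<le> X^2 * real (2*k+1)^2" by (intro mult_left_mono) auto
    then show ?thesis by (simp add: field_simps)
  qed
  also have "\<dots> = 4 * real (Suc k) * real ((2 * Suc k) choose Suc k) ^ 2"
  proof -
    have aux: "K \<noteq> 0 \<Longrightarrow> 16 * X^2 * a^2 / K = 4*K*(2*a*X/K)^2" for K a :: real
      by (simp add: power2_eq_square field_simps)
    show ?thesis unfolding X' by (rule aux) simp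
  qed
  finally show ?case .
qed

lemma central2:
  assumes "m \<ge> 2"
  shows "2 ^ (m + 1) / sqrt (real (m + 1)) \<le> 8 * real (m choose (m div 2))"
proof -
  define k where "k = m div 2"
  have k1: "k \<ge> 1" using assms k_def by auto
  define X where "X = real ((2 * k) choose k)"
  have XM: "X \<le> real (m choose k)" unfolding X_def by (simp add: binomial_right_mono k_def)
  have e16: "((4::real) ^ k) ^ 2 = 16 ^ k" by (induction k) (simp_all add: power_mult_distrib)
  have "((4::real) ^ k) ^ 2 \<le> (2 * sqrt (real k) * X) ^ 2"
    using central[OF k1] unfolding X_def e16 by (simp add: power_mult_distrib)
  then have 4: "(4::real) ^ k \<le> 2 * sqrt (real k) * X"
    using power2_le_imp_le X_def by (metis mult_nonneg_nonneg of_nat_0_le_iff real_sqrt_ge_zero zero_le_numeral)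
  have "(2::real) ^ (m + 1) \<le> 2 ^ (2 * k + 2)" by (intro power_increasing) (auto simp: k_def)
  also have "\<dots> = 4 * 4 ^ k" by (simp add: power_mult power_add)
  also have "\<dots> \<le> 8 * sqrt (real k) * X" using 4 by (simp add: mult_ac)
  also have "\<dots> \<le> 8 * sqrt (real (m + 1)) * real (m choose k)"
    by (intro mult_mono XM) (auto simp: k_def X_def)
  finally show ?thesis using k_def by (simp add: divide_le_eq mult.commute mult.left_commute)
qed

lemma exp_bounds: "exp (-0.9::real) \<le> 0.44" "exp (-1.1::real) \<ge> 0.2"
proof -
  have "1 + 0.9 + 0.9^2/2 \<le> exp (0.9::real)" by (rule exp_lower_Taylor_quadratic) simp
  then have "2.305 \<le> exp (0.9::real)" by (simp add: power2_eq_square)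
  then show "exp (-0.9::real) \<le> 0.44" by (simp add: exp_minus field_simps)
  have "1 + (-0.55) \<le> exp (-0.55::real)" by (rule exp_ge_add_one_self)
  then have "0.45^2 \<le> exp (-0.55::real)^2" by (intro power_mono) auto
  also have "exp (-0.55::real)^2 = exp (-1.1)" by (simp add: power2_eq_square flip: exp_add)
  finally show "exp (-1.1::real) \<ge> 0.2" by (simp add: power2_eq_square)
qed


lemma main_est:
  assumes bdef: "b = nat \<lfloor>sqrt (real n)\<rfloor>" and b100: "b \<ge> 100"
  shows "2 ^ n / sqrt (real n) / 400 \<le> real ((n - 1) choose ((n - 1 + (b + 1)) div 2))
           - real ((n - 1) choose ((n - 1 + (2 * b + 1)) div 2))
           - real ((n - 1) choose ((n - 1 + (2 * b + 2)) div 2))"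
proof -
  define B where "B = real b"
  define N where "N = real n"
  have s0: "0 \<le> sqrt (real n)" by simp
  have fl: "real b \<le> sqrt (real n)" "sqrt (real n) < real b + 1"
    using bdef s0 by (simp_all add: of_nat_nat le_nat_floor)
  have BN: "B^2 \<le> N"
    using power_mono[OF fl(1), of 2] unfolding B_def N_def by simp
  have "real n < (real b + 1)^2"
    using power_strict_mono[OF fl(2) s0, of 2] by simp
  then have "n < (b+1)^2" by (metis of_nat_1 of_nat_add of_nat_less_iff of_nat_power)
  then have "n \<le> b^2 + 2*b" by (simp add: power2_eq_square algebra_simps)
  then have NB: "N \<le> B^2 + 2*B" unfolding N_def B_def by (metis of_nat_le_iff of_nat_add of_nat_mult of_nat_power of_nat_numeral)
  have B100: "B \<ge> 100" using b100 B_def by simp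
  have BB: "B * B \<ge> 100 * B" using B100 by (intro mult_right_mono) auto
  define m where "m = n - 1"
  have n_big: "n \<ge> 10000"
  proof -
    have "(100::nat)^2 \<le> b^2" using b100 by (intro power_mono) auto
    then have "real ((100::nat)^2) \<le> N" using BN B_def by (metis of_nat_le_iff of_nat_power order_trans)
    then show ?thesis unfolding N_def by simp
  qed
  have M: "real m = N - 1" using n_big unfolding m_def N_def by simp
  define p where "p = (m + b + 1) div 2"
  define q where "q = (m + 2*b + 1) div 2"
  define q' where "q' = (m + 2*b + 2) div 2"
  define c where "c = m div 2"
  have e1: "(n - 1 + (b + 1)) div 2 = p" "(n - 1 + (2 * b + 1)) div 2 = q" "(n - 1 + (2 * b + 2)) div 2 = q'"
    unfolding p_def q_def q'_def m_def by (simp_all add: algebra_simps)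
  have "2 * b + 2 \<le> m"
  proof -
    have "2*B+3 \<le> N" using BN BB B100 unfolding power2_eq_square by linarith
    then have "real (2*b+3) \<le> N" unfolding B_def by simp
    then show ?thesis unfolding m_def N_def by linarith
  qed
  then have nat_facts: "m + b \<le> 2*p" "2*p \<le> m + b + 1" "m + 2*b \<le> 2*q" "c \<le> p" "m \<le> 2*c+1" "2*c \<le> m"
      "p \<le> q" "q \<le> q'" "q' \<le> m" "m div 2 \<le> q" "p \<le> m" "1 \<le> p"
    unfolding p_def q_def q'_def c_def using b100 by auto
  define P where "P = real p"
  have h1: "real (m + b) \<le> real (2*p)" using nat_facts(1) by (simp only: of_nat_le_iff)
  have h2: "real (2*p) \<le> real (m+b+1)" using nat_facts(2) by (simp only: of_nat_le_iff)
  have rP: "B + (N - 1) \<le> 2 * P" "2 * P \<le> N - 1 + B + 1"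
    using h1 h2 M unfolding P_def B_def by simp_all
  have st1: "real (m choose q') \<le> real (m choose q)"
    using binomial_antimono[of q q' m] nat_facts by simp
  define r where "r = real (m - p) / real (p + 1)"
  have st2: "real (m choose q) \<le> real (m choose p) * r ^ (q - p)"
    using up_bound[of p m "q - p"] nat_facts unfolding r_def by simp
  define y where "y = (2*B+2)/(N+B+1)"
  have r0: "0 \<le> r" unfolding r_def by simp
  have ry: "r \<le> 1 - y"
  proof -
    have mp: "real (m - p) = N - 1 - P" using nat_facts M unfolding P_def by (simp add: of_nat_diff)
    have h: "(N - 1 + B) * N \<le> 2 * P * N" using rP by (intro mult_right_mono) (auto simp: N_def)
    have pos: "0 < N + B + 1" "0 < P + 1" using B100 n_big unfolding N_def P_def by auto
    have "(N - 1 - P) * (N + B + 1) \<le> (P + 1) * (N + B + 1 - (2*B+2))"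
      using h by (simp add: algebra_simps)
    then show ?thesis unfolding r_def y_def mp using pos
      by (simp add: field_simps P_def)
  qed
  have "r ^ (q - p) \<le> exp (-y) ^ (q - p)"
    using ry exp_ge_add_one_self[of "-y"] r0 by (intro power_mono) auto
  also have "\<dots> = exp (- (y * real (q - p)))" by (simp add: exp_of_nat_mult[symmetric] mult.commute)
  also have "\<dots> \<le> exp (-0.9)"
  proof -
    have qp: "B - 1 \<le> 2 * real (q - p)"
      using nat_facts unfolding B_def by (simp add: of_nat_diff)
    have y0: "0 \<le> y" unfolding y_def using B100 N_def by simp
    have "(B+1)*(B-1) = B*B - 1" by (simp add: algebra_simps)
    moreover have "0.9*N + 0.9*B + 0.9 \<le> B*B - 1" using NB BB B100 unfolding power2_eq_square by linarith
    moreover have "0.9 * (N + B + 1) = 0.9*N + 0.9*B + 0.9" by (simp only: distrib_left mult_1_right)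
    ultimately have "0.9 * (N + B + 1) \<le> (B + 1) * (B - 1)" by linarith
    then have "0.9 \<le> y * ((B - 1) / 2)" unfolding y_def using B100 N_def
      by (simp add: field_simps)
    also have "\<dots> \<le> y * real (q - p)" using qp y0 by (intro mult_left_mono) auto
    finally show ?thesis by (simp only: exp_le_cancel_iff)
  qed
  also have "\<dots> \<le> 0.44" by (rule exp_bounds(1))
  finally have st3: "r ^ (q - p) \<le> 0.44" .
  define s where "s = real (m - p + 1) / real p"
  have st4: "real (m choose p) \<ge> real (m choose c) * s ^ (p - c)"
    using down_bound[of c "p - c" p m] nat_facts unfolding s_def by simp
  define z where "z = 2*B/(N+B)"
  have BltN: "B < N" using BN BB B100 unfolding power2_eq_square by linarith
  have z01: "0 \<le> z" "z < 1" unfolding z_def using B100 BltN by (auto simp: field_simps)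
  have sz: "1 - z \<le> s"
  proof -
    have mp: "real (m - p + 1) = N - P" using nat_facts M unfolding P_def by (simp add: of_nat_diff)
    have h: "2 * P * N \<le> (N + B) * N" using rP by (intro mult_right_mono) (auto simp: N_def)
    have pos: "0 < N + B" "0 < P" using B100 n_big nat_facts unfolding N_def P_def by auto
    have "(N + B - 2*B) * P \<le> (N - P) * (N + B)"
      using h by (simp add: algebra_simps)
    then show ?thesis unfolding s_def z_def mp using pos
      by (simp add: field_simps P_def)
  qed
  define w where "w = z / (1 - z)"
  have zw: "exp (-w) \<le> 1 - z"
  proof -
    have "1 + w \<le> exp w" by (rule exp_ge_add_one_self)
    moreover have "1 + w = 1 / (1 - z)" unfolding w_def using z01 by (simp add: field_simps)
    ultimately have "1 / (1 - z) \<le> exp w" by simp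
    then show ?thesis using z01 by (simp add: exp_minus field_simps)
  qed
  have "exp (-1.1) \<le> exp (- (w * real (p - c)))"
  proof -
    have pc: "2 * real (p - c) \<le> B + 2" using nat_facts unfolding B_def by (simp add: of_nat_diff)
    have wB: "w = 2*B/(N - B)"
    proof -
      have np: "N + B > 0" "N - B > 0" using BltN B100 by auto
      have e: "1 - z = (N - B)/(N + B)" unfolding z_def using np by (simp add: field_simps)
      have zz: "z * (N + B) = 2*B" unfolding z_def using np by simp
      show ?thesis by (simp only: w_def e divide_divide_eq_right zz)
    qed
    have w0: "0 \<le> w" using z01 unfolding w_def by simp
    have "w * real (p - c) \<le> w * ((B + 2)/2)" using pc w0 by (intro mult_left_mono) auto
    also have "\<dots> \<le> 1.1"
    proof -
      have "N - B \<ge> B*B - B" using BN by (simp add: power2_eq_square)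
      moreover have "B*B - B > 0" using BB B100 by simp
      moreover have "B * (B + 2) \<le> 1.1 * (B*B - B)"
      proof -
        have e1: "B * (B + 2) = B*B + 2*B" by (simp add: algebra_simps)
        have e2: "1.1 * (B*B - B) = 1.1*(B*B) - 1.1*B" by (simp only: right_diff_distrib)
        have "B*B + 2*B \<le> 1.1*(B*B) - 1.1*B" using BB B100 by linarith
        then show ?thesis unfolding e1 e2 .
      qed
      moreover have "1.1 * (B*B - B) \<le> 1.1 * (N - B)" using \<open>N - B \<ge> B*B - B\<close> by (intro mult_left_mono) auto
      ultimately have "B * (B + 2) \<le> 1.1 * (N - B)" by linarith
      then show ?thesis unfolding wB using \<open>B*B - B > 0\<close> \<open>N - B \<ge> B*B - B\<close>
        by (simp add: field_simps)
    qed
    finally show ?thesis by simp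
  qed
  also have "exp (- (w * real (p - c))) = exp (-w) ^ (p - c)"
    by (simp add: exp_of_nat_mult[symmetric] mult.commute)
  also have "\<dots> \<le> (1 - z) ^ (p - c)" using zw by (intro power_mono) auto
  also have "\<dots> \<le> s ^ (p - c)" using sz z01 by (intro power_mono) auto
  finally have st5: "0.2 \<le> s ^ (p - c)" using exp_bounds(2) by simp
  have st6: "2 ^ n / sqrt (real n) \<le> 8 * real (m choose c)"
    using central2[of m] n_big unfolding m_def c_def by simp
  have Cp0: "0 \<le> real (m choose p)" by simp
  have "2 ^ n / sqrt (real n) / 400 \<le> 0.12 * (0.2 * real (m choose c))"
    using st6 by simp
  also have "\<dots> \<le> 0.12 * (real (m choose c) * s ^ (p - c))"
  proof -
    have "real (m choose c) * 0.2 \<le> real (m choose c) * s ^ (p - c)" using st5 by (intro mult_left_mono) auto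
    then have "0.2 * real (m choose c) \<le> real (m choose c) * s ^ (p - c)" by (metis mult.commute)
    then show ?thesis by (rule mult_left_mono) simp
  qed
  also have "\<dots> \<le> 0.12 * real (m choose p)" using st4 by simp
  also have "\<dots> \<le> real (m choose p) - 2 * (real (m choose p) * 0.44)" by simp
  also have "\<dots> \<le> real (m choose p) - 2 * (real (m choose p) * r ^ (q - p))"
    using st3 Cp0 by (intro diff_left_mono mult_left_mono) auto
  also have "\<dots> \<le> real (m choose p) - real (m choose q) - real (m choose q')"
    using st1 st2 by simp
  finally show ?thesis unfolding e1 m_def .
qed

theorem lemma12:
  shows "(\<lambda>n. real (num_bounded_walks n)) \<in> \<Omega>(\<lambda>n. 2 ^ n / sqrt (real n))"
proof (rule landau_omega.bigI[where c = "1/400"])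
  show "(0::real) < 1/400" by simp
  show "\<forall>\<^sub>F n in at_top. 1/400 * norm (2 ^ n / sqrt (real n) :: real) \<le> norm (real (num_bounded_walks n))"
  proof (rule eventually_at_top_linorderI[of 10000])
    fix n :: nat assume n: "n \<ge> 10000"
    define b where "b = nat \<lfloor>sqrt (real n)\<rfloor>"
    have s100: "sqrt 10000 = (100::real)" by (rule real_sqrt_unique) auto
    have "sqrt 10000 \<le> sqrt (real n)" using n by (subst real_sqrt_le_iff) simp
    then have "100 \<le> sqrt (real n)" using s100 by simp
    then have b100: "b \<ge> 100" unfolding b_def by (simp add: le_nat_floor le_floor_iff)
    have "card (Tset n (b+1)) \<le> num_bounded_walks n + card (Tset n (2*b+1)) + card (Tset n (2*b+2))"
      using bad_bound[of b n] b100 unfolding num_bounded_walks_def b_def by simp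
    moreover have "card (Tset n H) = (n - 1) choose ((n - 1 + H) div 2)" if "H \<ge> 1" for H
      using card_Tset[of n H] that n by simp
    ultimately have "real ((n - 1) choose ((n - 1 + (b + 1)) div 2))
           - real ((n - 1) choose ((n - 1 + (2 * b + 1)) div 2))
           - real ((n - 1) choose ((n - 1 + (2 * b + 2)) div 2)) \<le> real (num_bounded_walks n)"
      by simp
    moreover have "2 ^ n / sqrt (real n) / 400 \<le> real ((n - 1) choose ((n - 1 + (b + 1)) div 2))
           - real ((n - 1) choose ((n - 1 + (2 * b + 1)) div 2))
           - real ((n - 1) choose ((n - 1 + (2 * b + 2)) div 2))"
      by (rule main_est[OF b_def b100])
    ultimately show "1/400 * norm (2 ^ n / sqrt (real n) :: real) \<le> norm (real (num_bounded_walks n))"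
      by simp
  qed
qed

end
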